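(* Let $D$ be an upright long knot diagram (possibly with null vertices) and let $D'$ be obtained from $D$ by the null vertex move: an edge of $D$ with rotation number $\varphi$ is split, by inserting a new null vertex at a point where its tangent points upward, into two consecutive edges with rotation numbers $\varphi'$ and $\varphi''$, where $\varphi'+\varphi''=\varphi$ (or conversely, such a null vertex is removed). Then $\theta_0(D')=\theta_0(D)$.
   Context: An upright long knot diagram is a planar diagram of a long oriented knot such that at every crossing both strands point upward and the knot points upward at its beginning and end. It may contain null vertices (marked points on the knot, away from crossings, where the tangent points upward, whose only role is to cut edges). Edges are the arcs obtained by cutting the knot at all crossings (both strands) and null vertices; they carry distinct labels, $\ell^+$ denotes the label of the edge following $\ell$. Each edge $k$ has a rotation number $\varphi_k$: the signed number of points where its tangent is horizontal and heading right, cups $+1$, caps $-1$. A crossing is $c=(s,i,j)$: sign $s=\pm1$, incoming over-edge $i$, incoming under-edge $j$ (outgoing edges $i^+$, $j^+$); $X$ is the set of crossings. A null vertex with incoming edge $j$ and outgoing edge $k$ is recorded as $(j,k)$. Let $A=I+\sum_cA_c+\sum_{\mathrm{nv}}A_{\mathrm{nv}}$ where $A_c$ is zero except for entries $-T^s$ at $(i,i^+)$, $T^s-1$ at $(i,j^+)$, $-1$ at $(j,j^+)$, and $A_{\mathrm{nv}}$ is zero except for $-1$ at $(j,k)$. Let $G=(g_{\alpha\beta})=A^{-1}$ over $\mathbb{Q}(T)$. Let $T_3=T_1T_2$ and let $g_{\nu\alpha\beta}$ be $g_{\alpha\beta}$ with $T\to T_\nu$ ($\nu=1,2,3$). For crossings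 $c=(s,i,j)$, $c_0=(s_0,i_0,j_0)$, $c_1=(s_1,i_1,j_1)$ and an edge $k$: $$F_1(c)= s\Big[\tfrac12 - g_{3ii} + T_2^s g_{1ii}g_{2ji} - T_2^s g_{3jj}g_{2ji} - (T_2^s-1)g_{3ii}g_{2ji} + (T_3^s-1)g_{2ji}g_{3ji} - g_{1ii}g_{2jj} + 2g_{3ii}g_{2jj} + g_{1ii}g_{3jj} - g_{2ii}g_{3jj}\Big]$$ $$\quad + \frac{s}{T_2^s-1}\Big[(T_1^s-1)T_2^s\big(g_{3jj}g_{1ji}-g_{2jj}g_{1ji}+T_2^sg_{1ji}g_{2ji}\big) + (T_3^s-1)g_{3ji}\big(1-T_2^sg_{1ii}+g_{2ij}+(T_2^s-2)g_{2jj}-(T_1^s-1)(T_2^s+1)g_{1ji}\big)\Big],$$ $$F_2(c_0,c_1)=\frac{s_1(T_1^{s_0}-1)(T_3^{s_1}-1)g_{1j_1i_0}g_{3j_0i_1}}{T_2^{s_1}-1}\Big(T_2^{s_0}g_{2i_1i_0}+g_{2j_1j_0}-T_2^{s_0}g_{2j_1i_0}-g_{2i_1j_0}\Big),\qquad F_3(k)=(g_{3kk}-\tfrac12)\varphi_k,$$ and $\theta_0(D)=\sum_{c\in X}F_1(c)+\sum_{c_0,c_1\in X}F_2(c_0,c_1)+\sum_{\text{edges }k}F_3(k)$ (ordered pairs, including $c_0=c_1$; null vertices contribute no terms of their own). *)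

theory Defs
  imports "Jordan_Normal_Form.Gauss_Jordan_Elimination"
          "HOL-Computational_Algebra.Polynomial"
          "HOL-Computational_Algebra.Fraction_Field"
begin

text \<open>Combinatorial data of an upright long knot diagram.
  edges: the edge labels in the order in which the knot traverses them
    (so the successor l^+ of l is the next list element);
  crossings: the crossings (s, i, j), s = +-1, i incoming over-edge, j incoming under-edge;
  nullverts: the null vertices (j, k), j incoming, k outgoing edge;
  rot: the rotation number of each edge.\<close>

record 'l diagram =
  edges :: "'l list"
  crossings :: "(int \<times> 'l \<times> 'l) list"
  nullverts :: "('l \<times> 'l) list"
  rot :: "'l \<Rightarrow> int"

definition ix :: "'l diagram \<Rightarrow> 'l \<Rightarrow> nat" where
  "ix D l = (LEAST n. n < length (edges D) \<and> edges D ! n = l)"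

definition nxt :: "'l diagram \<Rightarrow> 'l \<Rightarrow> 'l" where
  "nxt D l = edges D ! (ix D l + 1)"

definition wf_diagram :: "'l diagram \<Rightarrow> bool" where
  "wf_diagram D \<longleftrightarrow>
     edges D \<noteq> [] \<and> distinct (edges D) \<and>
     (\<forall>(s, i, j) \<in> set (crossings D).
        (s = 1 \<or> s = -1) \<and> i \<in> set (butlast (edges D)) \<and> j \<in> set (butlast (edges D)) \<and> i \<noteq> j) \<and>
     (\<forall>(j, k) \<in> set (nullverts D). j \<in> set (butlast (edges D)) \<and> k = nxt D j) \<and>
     (\<forall>l \<in> set (butlast (edges D)).
        length (filter (\<lambda>(s, i, j). i = l \<or> j = l) (crossings D))
        + length (filter (\<lambda>(j, k). j = l) (nullverts D)) = 1)"

definition cr_entry :: "'l diagram \<Rightarrow> 'a::field \<Rightarrow> int \<times> 'l \<times> 'l \<Rightarrow> nat \<Rightarrow> nat \<Rightarrow> 'a" where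
  "cr_entry D t c r q = (case c of (s, i, j) \<Rightarrow>
      (if (r, q) = (ix D i, ix D (nxt D i)) then - (t powi s) else 0)
    + (if (r, q) = (ix D i, ix D (nxt D j)) then t powi s - 1 else 0)
    + (if (r, q) = (ix D j, ix D (nxt D j)) then -1 else 0))"

definition nv_entry :: "'l diagram \<Rightarrow> 'l \<times> 'l \<Rightarrow> nat \<Rightarrow> nat \<Rightarrow> 'a::field" where
  "nv_entry D v r q = (case v of (j, k) \<Rightarrow> if (r, q) = (ix D j, ix D k) then -1 else 0)"

definition Amat :: "'l diagram \<Rightarrow> 'a::field \<Rightarrow> 'a mat" where
  "Amat D t = mat (length (edges D)) (length (edges D)) (\<lambda>(r, q).
      (if r = q then 1 else 0)
    + sum_list (map (\<lambda>c. cr_entry D t c r q) (crossings D))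
    + sum_list (map (\<lambda>v. nv_entry D v r q) (nullverts D)))"

definition Gmat :: "'l diagram \<Rightarrow> 'a::field \<Rightarrow> 'a mat" where
  "Gmat D t = the (mat_inverse (Amat D t))"

definition gg :: "'l diagram \<Rightarrow> 'a::field \<Rightarrow> 'l \<Rightarrow> 'l \<Rightarrow> 'a" where
  "gg D t a b = Gmat D t $$ (ix D a, ix D b)"

definition F1 :: "'l diagram \<Rightarrow> 'a::field \<Rightarrow> 'a \<Rightarrow> int \<times> 'l \<times> 'l \<Rightarrow> 'a" where
  "F1 D T1 T2 c = (case c of (s, i, j) \<Rightarrow>
     let T3 = T1 * T2; g1 = gg D T1; g2 = gg D T2; g3 = gg D T3; \<sigma> = (of_int s :: 'a) in
     \<sigma> * (1/2 - g3 i i + T2 powi s * g1 i i * g2 j i - T2 powi s * g3 j j * g2 j i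
          - (T2 powi s - 1) * g3 i i * g2 j i + (T3 powi s - 1) * g2 j i * g3 j i
          - g1 i i * g2 j j + 2 * g3 i i * g2 j j + g1 i i * g3 j j - g2 i i * g3 j j)
   + \<sigma> / (T2 powi s - 1) *
       ((T1 powi s - 1) * T2 powi s *
          (g3 j j * g1 j i - g2 j j * g1 j i + T2 powi s * g1 j i * g2 j i)
      + (T3 powi s - 1) * g3 j i *
          (1 - T2 powi s * g1 i i + g2 i j + (T2 powi s - 2) * g2 j j
           - (T1 powi s - 1) * (T2 powi s + 1) * g1 j i)))"

definition F2 :: "'l diagram \<Rightarrow> 'a::field \<Rightarrow> 'a \<Rightarrow> int \<times> 'l \<times> 'l \<Rightarrow> int \<times> 'l \<times> 'l \<Rightarrow> 'a" where
  "F2 D T1 T2 c0 c1 = (case c0 of (s0, i0, j0) \<Rightarrow> case c1 of (s1, i1, j1) \<Rightarrow>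
     let T3 = T1 * T2; g1 = gg D T1; g2 = gg D T2; g3 = gg D T3 in
     of_int s1 * (T1 powi s0 - 1) * (T3 powi s1 - 1) * g1 j1 i0 * g3 j0 i1 / (T2 powi s1 - 1)
     * (T2 powi s0 * g2 i1 i0 + g2 j1 j0 - T2 powi s0 * g2 j1 i0 - g2 i1 j0))"

definition F3 :: "'l diagram \<Rightarrow> 'a::field \<Rightarrow> 'a \<Rightarrow> 'l \<Rightarrow> 'a" where
  "F3 D T1 T2 k = (gg D (T1 * T2) k k - 1/2) * of_int (rot D k)"

definition theta0_at :: "'l diagram \<Rightarrow> 'a::field \<Rightarrow> 'a \<Rightarrow> 'a" where
  "theta0_at D T1 T2 =
     sum_list (map (F1 D T1 T2) (crossings D))
   + sum_list (map (\<lambda>(c0, c1). F2 D T1 T2 c0 c1) (List.product (crossings D) (crossings D)))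
   + sum_list (map (F3 D T1 T2) (edges D))"

text \<open>The field Q(T1,T2), realised as the fraction field of Q[T1][T2],
  and the two variables.\<close>
type_synonym QT = "rat poly poly fract"

definition varT1 :: QT where "varT1 = Fract [:[:0, 1:]:] 1"
definition varT2 :: QT where "varT2 = Fract [:0, 1:] 1"

definition theta0 :: "'l diagram \<Rightarrow> QT" where
  "theta0 D = theta0_at D varT1 varT2"

text \<open>Incoming occurrences of e at its head become b; the
  outgoing occurrence (k = e in a null vertex) becomes a; outgoing edges of crossings
  are determined by the edge order.\<close>
definition null_vertex_move :: "'l diagram \<Rightarrow> 'l diagram \<Rightarrow> bool" where
  "null_vertex_move D D' \<longleftrightarrow> (\<exists>e a b.
     e \<in> set (edges D) \<and> a \<noteq> b \<and> a \<notin> set (edges D) - {e} \<and> b \<notin> set (edges D) - {e} \<and>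
     edges D' = concat (map (\<lambda>l. if l = e then [a, b] else [l]) (edges D)) \<and>
     crossings D' = map (\<lambda>(s, i, j). (s, if i = e then b else i, if j = e then b else j)) (crossings D) \<and>
     nullverts D' = (a, b) # map (\<lambda>(j, k). (if j = e then b else j, if k = e then a else k)) (nullverts D) \<and>
     (\<forall>l \<in> set (edges D). l \<noteq> e \<longrightarrow> rot D' l = rot D l) \<and>
     rot D' a + rot D' b = rot D e)"

end

theory Submission
  imports Defs "Jordan_Normal_Form.Determinant"
begin

definition phi :: "nat \<Rightarrow> nat \<Rightarrow> nat" where "phi p r = (if r \<le> p then r else r - 1)"
definition psi :: "nat \<Rightarrow> nat \<Rightarrow> nat" where "psi p m = (if m < p then m else m + 1)"
definition alp :: "nat \<Rightarrow> nat \<Rightarrow> nat" where "alp p m = (if m \<le> p then m else m + 1)"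

lemma sum_split_alp:
  assumes "p < n"
  shows "(\<Sum>k<Suc n. g k) = g (p+1) + (\<Sum>m<n. (g :: nat \<Rightarrow> 'a::comm_monoid_add) (alp p m))"
proof -
  have inj: "inj_on (alp p) {..<n}" by (auto simp: inj_on_def alp_def split: if_splits)
  have im: "alp p ` {..<n} = {..<Suc n} - {p+1}"
  proof
    show "alp p ` {..<n} \<subseteq> {..<Suc n} - {p+1}" by (auto simp: alp_def)
    show "{..<Suc n} - {p+1} \<subseteq> alp p ` {..<n}"
    proof
      fix k assume k: "k \<in> {..<Suc n} - {p+1}"
      show "k \<in> alp p ` {..<n}"
      proof (cases "k \<le> p")
        case True then show ?thesis using assms by (intro image_eqI[of _ _ k]) (auto simp: alp_def)
      next
        case False then show ?thesis using k by (intro image_eqI[of _ _ "k - 1"]) (auto simp: alp_def)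
      qed
    qed
  qed
  have "(\<Sum>k<Suc n. g k) = g (p+1) + (\<Sum>k\<in>{..<Suc n} - {p+1}. g k)"
    using assms by (subst sum.remove[of _ "p+1"]) auto
  also have "(\<Sum>k\<in>{..<Suc n} - {p+1}. g k) = (\<Sum>m<n. g (alp p m))"
    using sum.reindex[OF inj, of g] im by simp
  finally show ?thesis .
qed

definition extA :: "nat \<Rightarrow> nat \<Rightarrow> 'a::ring_1 mat \<Rightarrow> 'a mat" where
  "extA n p A = mat (Suc n) (Suc n) (\<lambda>(r,q). if r = p then (if q = p then 1 else if q = p+1 then -1 else 0)
     else if q = p+1 then (if r = p+1 then 1 else 0)
     else A $$ (phi p r, phi p q) - (if r = p+1 \<and> q = p then 1 else 0))"

definition extG :: "nat \<Rightarrow> nat \<Rightarrow> 'a::ring_1 mat \<Rightarrow> 'a mat" where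
  "extG n p G = mat (Suc n) (Suc n) (\<lambda>(r,q). G $$ (phi p r, phi p q) - (if r = p+1 \<and> q = p then 1 else 0))"

lemma mult_entry: "A \<in> carrier_mat n m \<Longrightarrow> B \<in> carrier_mat m k \<Longrightarrow> i < n \<Longrightarrow> j < k \<Longrightarrow>
   (A * B) $$ (i,j) = (\<Sum>l<m. A $$ (i,l) * B $$ (l,j))"
  unfolding carrier_mat_def by (simp add: scalar_prod_def lessThan_atLeast0)

lemma extA_idx:
  assumes "r < Suc n" "q < Suc n"
  shows "extA n p A $$ (r,q) = (if r = p then (if q = p then 1 else if q = p+1 then -1 else 0)
     else if q = p+1 then (if r = p+1 then 1 else 0)
     else A $$ (phi p r, phi p q) - (if r = p+1 \<and> q = p then 1 else 0))"
  using assms unfolding extA_def by simp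

lemma extG_idx:
  assumes "r < Suc n" "q < Suc n"
  shows "extG n p G $$ (r,q) = G $$ (phi p r, phi p q) - (if r = p+1 \<and> q = p then 1 else 0)"
  using assms unfolding extG_def by simp

lemma ext_dims[simp]: "dim_row (extA n p A) = Suc n" "dim_col (extA n p A) = Suc n"
  "dim_row (extG n p G) = Suc n" "dim_col (extG n p G) = Suc n"
  by (simp_all add: extA_def extG_def)

lemma phi_lt: "r < Suc n \<Longrightarrow> p < n \<Longrightarrow> phi p r < n" unfolding phi_def by (cases "r \<le> p") simp_all
lemma phi_pp[simp]: "phi p p = p" "phi p (Suc p) = p" unfolding phi_def by simp_all
lemma phi_eq: "r \<noteq> p \<Longrightarrow> (phi p r = phi p q) = (r = q \<or> (r = Suc p \<and> q = p))"
  unfolding phi_def by (cases "r \<le> p"; cases "q \<le> p"; simp; presburger)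

lemma alp_facts: "alp p m \<noteq> Suc p" "phi p (alp p m) = m" "m < n \<Longrightarrow> alp p m < Suc n"
    "(alp p m = p) = (m = p)" "alp p p = p"
  unfolding alp_def phi_def by simp_all

lemma ext_inverse:
  fixes A G :: "'a::comm_ring_1 mat"
  assumes A: "A \<in> carrier_mat n n" and G: "G \<in> carrier_mat n n" and AG: "A * G = 1\<^sub>m n" and p: "p < n"
  shows "extA n p A * extG n p G = 1\<^sub>m (Suc n)"
proof (rule eq_matI)
  show "dim_row (extA n p A * extG n p G) = dim_row (1\<^sub>m (Suc n))" by simp
  show "dim_col (extA n p A * extG n p G) = dim_col (1\<^sub>m (Suc n))" by simp
  fix r q assume r: "r < dim_row (1\<^sub>m (Suc n))" and q: "q < dim_col (1\<^sub>m (Suc n))"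
  hence r: "r < Suc n" and q: "q < Suc n" by auto
  have AGe: "(\<Sum>l<n. A $$ (i,l) * G $$ (l,j)) = (if i = j then 1 else 0)" if "i < n" "j < n" for i j
  proof -
    have "(\<Sum>l<n. A $$ (i,l) * G $$ (l,j)) = (A * G) $$ (i,j)" by (rule mult_entry[OF A G that, symmetric])
    also have "\<dots> = 1\<^sub>m n $$ (i,j)" unfolding AG ..
    also have "\<dots> = (if i = j then 1 else 0)" using that by (rule index_one_mat)
    finally show ?thesis .
  qed
  have phir: "phi p r < n" "phi p q < n" using phi_lt[OF r p] phi_lt[OF q p] by simp_all
  have cA: "extA n p A \<in> carrier_mat (Suc n) (Suc n)" by (rule carrier_matI) simp_all
  have cG: "extG n p G \<in> carrier_mat (Suc n) (Suc n)" by (rule carrier_matI) simp_all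
  have "(extA n p A * extG n p G) $$ (r,q) = (\<Sum>k<Suc n. extA n p A $$ (r,k) * extG n p G $$ (k,q))"
    by (rule mult_entry[OF cA cG r q])
  also have "\<dots> = extA n p A $$ (r,p+1) * extG n p G $$ (p+1,q) +
      (\<Sum>m<n. extA n p A $$ (r,alp p m) * extG n p G $$ (alp p m,q))"
    by (rule sum_split_alp[OF p, where g="\<lambda>k. extA n p A $$ (r,k) * extG n p G $$ (k,q)"])
  also have "\<dots> = (if r = q then 1 else 0)"
  proof (cases "r = p")
    case True
    have "(\<Sum>m<n. extA n p A $$ (r,alp p m) * extG n p G $$ (alp p m,q))
        = (\<Sum>m<n. if m = p then extG n p G $$ (p,q) else 0)"
    proof (intro sum.cong refl)
      fix m assume "m \<in> {..<n}"
      then show "extA n p A $$ (r,alp p m) * extG n p G $$ (alp p m,q) = (if m = p then extG n p G $$ (p,q) else 0)"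
        using True p by (simp add: extA_idx r alp_facts)
    qed
    also have "\<dots> = extG n p G $$ (p,q)" using p by simp
    finally show ?thesis using True p q
      by (simp add: extA_idx extG_idx)
  next
    case False
    have "(\<Sum>m<n. extA n p A $$ (r,alp p m) * extG n p G $$ (alp p m,q))
        = (\<Sum>m<n. (A $$ (phi p r, m) - (if r = p+1 \<and> m = p then 1 else 0)) * G $$ (m, phi p q))"
    proof (intro sum.cong refl)
      fix m assume "m \<in> {..<n}"
      then show "extA n p A $$ (r,alp p m) * extG n p G $$ (alp p m,q) = (A $$ (phi p r, m) - (if r = p+1 \<and> m = p then 1 else 0)) * G $$ (m, phi p q)"
        using False by (simp add: extA_idx extG_idx r q alp_facts)
    qed
    also have "\<dots> = (\<Sum>m<n. A $$ (phi p r, m) * G $$ (m, phi p q)) - (\<Sum>m<n. (if r = p+1 \<and> m = p then 1 else 0) * G $$ (m, phi p q))"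
      by (simp add: left_diff_distrib sum_subtractf)
    also have "(\<Sum>m<n. (if r = p+1 \<and> m = p then 1 else 0) * G $$ (m, phi p q)) = (\<Sum>m<n. if m = p then (if r = p+1 then G $$ (p, phi p q) else 0) else 0)"
      by (intro sum.cong refl) simp
    also have "\<dots> = (if r = p+1 then G $$ (p, phi p q) else 0)" using p by simp
    also have "(\<Sum>m<n. A $$ (phi p r, m) * G $$ (m, phi p q)) = (if phi p r = phi p q then 1 else 0)"
      using AGe phir by simp
    finally have ss: "(\<Sum>m<n. extA n p A $$ (r,alp p m) * extG n p G $$ (alp p m,q)) = (if phi p r = phi p q then 1 else 0) - (if r = p+1 then G $$ (p, phi p q) else 0)" .
    have pe: "phi p r = phi p q \<longleftrightarrow> (r = q \<or> (r = Suc p \<and> q = p))" using False by (rule phi_eq)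
    show ?thesis unfolding ss using pe using False p q r
      by (simp add: extA_idx extG_idx algebra_simps)
  qed
  also have "\<dots> = 1\<^sub>m (Suc n) $$ (r,q)" using r q by (rule index_one_mat[symmetric])
  finally show "(extA n p A * extG n p G) $$ (r,q) = 1\<^sub>m (Suc n) $$ (r,q)" .
qed


lemma ix_nth: "distinct (edges D) \<Longrightarrow> k < length (edges D) \<Longrightarrow> ix D (edges D ! k) = k"
  unfolding ix_def by (rule Least_equality) (auto simp: nth_eq_iff_index_eq)

lemma ix_in: assumes "x \<in> set (edges D)"
  shows "ix D x < length (edges D) \<and> edges D ! ix D x = x"
proof -
  obtain k where "k < length (edges D)" "edges D ! k = x" using assms by (auto simp: in_set_conv_nth)
  then show ?thesis unfolding ix_def by (rule LeastI[where P="\<lambda>n. n < length (edges D) \<and> edges D ! n = x", OF conjI])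
qed

lemma psi_ne: "psi p x \<noteq> p" unfolding psi_def by simp
lemma alp_ne: "alp p y \<noteq> Suc p" unfolding alp_def by simp
lemma psi_ne': "(p = psi p x) = False" unfolding psi_def by simp
lemma alp_ne': "(Suc p = alp p y) = False" unfolding alp_def by simp
lemma posn1: "r \<noteq> p \<Longrightarrow> (r = psi p x) = (phi p r = x)"
  unfolding psi_def phi_def by (cases "x < p"; cases "r \<le> p"; simp; presburger)
lemma posn2: "q \<noteq> Suc p \<Longrightarrow> (q = alp p y) = (phi p q = y)"
  unfolding alp_def phi_def by (cases "y \<le> p"; cases "q \<le> p"; simp; presburger)

lemma concat_map_id: "(\<And>x. x \<in> set xs \<Longrightarrow> x \<noteq> e) \<Longrightarrow> concat (map (\<lambda>l. if l = e then [a, b] else [l]) xs) = xs"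
  by (induct xs) simp_all

lemma sum_list_map_concat: "sum_list (map f (concat xss)) = sum_list (map (\<lambda>xs. sum_list (map f xs)) xss)"
  by (induct xss) simp_all

lemma sum_list_map_0: "(\<And>x. x \<in> set xs \<Longrightarrow> f x = 0) \<Longrightarrow> sum_list (map f xs) = (0::'a::monoid_add)"
  by (induct xs) simp_all

lemma ix_butlast: assumes "distinct (edges D)" "x \<in> set (butlast (edges D))"
  shows "ix D x + 1 < length (edges D)" "ix D (nxt D x) = ix D x + 1"
proof -
  obtain k where k: "k < length (butlast (edges D))" "butlast (edges D) ! k = x" using assms(2) by (auto simp: in_set_conv_nth)
  then have k2: "k + 1 < length (edges D)" "edges D ! k = x" by (auto simp: nth_butlast)
  then have "ix D x = k" using assms(1) ix_nth[of D k] by simp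
  then show "ix D x + 1 < length (edges D)" "ix D (nxt D x) = ix D x + 1"
    using k2 assms(1) ix_nth[of D "k+1"] by (simp_all add: nxt_def)
qed

definition cre :: "'l diagram \<Rightarrow> 'b::comm_ring_1 \<Rightarrow> int \<times> 'l \<times> 'l \<Rightarrow> nat \<Rightarrow> nat \<Rightarrow> 'b" where
  "cre D x c r q = (case c of (s, i, j) \<Rightarrow>
      (if (r, q) = (ix D i, ix D (nxt D i)) then - (if s = 1 then x * x else 1) else 0)
    + (if (r, q) = (ix D i, ix D (nxt D j)) then (if s = 1 then x * x - x else 1 - x) else 0)
    + (if (r, q) = (ix D j, ix D (nxt D j)) then - x else 0))"

definition nve :: "'l diagram \<Rightarrow> 'b::comm_ring_1 \<Rightarrow> 'l \<times> 'l \<Rightarrow> nat \<Rightarrow> nat \<Rightarrow> 'b" where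
  "nve D x v r q = (case v of (j, k) \<Rightarrow> if (r, q) = (ix D j, ix D k) then - x else 0)"

definition Bm :: "'l diagram \<Rightarrow> 'b::comm_ring_1 \<Rightarrow> 'b mat" where
  "Bm D x = mat (length (edges D)) (length (edges D)) (\<lambda>(r, q).
      (if r = q then x else 0)
    + sum_list (map (\<lambda>c. cre D x c r q) (crossings D))
    + sum_list (map (\<lambda>v. nve D x v r q) (nullverts D)))"

lemma sum_list_mult_const: "(t::'a::comm_ring_1) * sum_list (map f xs) = sum_list (map (\<lambda>x. t * f x) xs)"
  by (induct xs) (simp_all add: algebra_simps)

lemma Bm_Amat:
  fixes t :: "'a::field"
  assumes wf: "wf_diagram D" and t: "t \<noteq> 0"
  shows "Bm D t = t \<cdot>\<^sub>m Amat D t"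
proof (rule eq_matI)
  fix r q assume r: "r < dim_row (t \<cdot>\<^sub>m Amat D t)" and q: "q < dim_col (t \<cdot>\<^sub>m Amat D t)"
  have cr: "t * cr_entry D t c r q = cre D t c r q" if "c \<in> set (crossings D)" for c
  proof -
    obtain s i j where c: "c = (s,i,j)" by (cases c)
    have "s = 1 \<or> s = -1" using wf that c unfolding wf_diagram_def by fastforce
    then show ?thesis unfolding c cr_entry_def cre_def using t
      by (auto simp: algebra_simps power_int_minus)
  qed
  have nv: "t * nv_entry D v r q = nve D t v r q" for v
    by (cases v) (simp add: nv_entry_def nve_def)
  have "(t \<cdot>\<^sub>m Amat D t) $$ (r,q) = t * ((if r = q then 1 else 0)
    + sum_list (map (\<lambda>c. cr_entry D t c r q) (crossings D))
    + sum_list (map (\<lambda>v. nv_entry D v r q) (nullverts D)))"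
    using r q by (simp add: Amat_def)
  also have "\<dots> = (if r = q then t else 0)
    + sum_list (map (\<lambda>c. t * cr_entry D t c r q) (crossings D))
    + sum_list (map (\<lambda>v. t * nv_entry D v r q) (nullverts D))"
    by (simp add: distrib_left sum_list_mult_const)
  also have "\<dots> = Bm D t $$ (r,q)"
    using r q cr nv by (simp add: Bm_def Amat_def cong: map_cong)
  finally show "Bm D t $$ (r,q) = (t \<cdot>\<^sub>m Amat D t) $$ (r,q)" by simp
qed (simp_all add: Bm_def Amat_def)

lemma (in comm_ring_hom) Bm_hom: "map_mat hom (Bm D x) = Bm D (hom x)"
proof -
  have c: "hom (cre D x c r q) = cre D (hom x) c r q" for c r q
    by (cases c) (simp add: cre_def hom_distribs)
  have v: "hom (nve D x v r q) = nve D (hom x) v r q" for v r q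
    by (cases v) (simp add: nve_def hom_distribs)
  show ?thesis
    by (rule eq_matI) (simp_all add: Bm_def hom_distribs hom_sum_list o_def c v)
qed


lemma prod_list_map_1: "prod_list (map (\<lambda>i. 1::'a::monoid_mult) xs) = 1"
  by (induct xs) simp_all

lemma det_Bm1:
  assumes wf: "wf_diagram D"
  shows "det (Bm D (1::rat)) = 1"
proof -
  let ?n = "length (edges D)"
  have dist: "distinct (edges D)" using wf by (simp add: wf_diagram_def)
  have crs: "\<And>s i j. (s,i,j) \<in> set (crossings D) \<Longrightarrow> i \<in> set (butlast (edges D)) \<and> j \<in> set (butlast (edges D))"
    using wf unfolding wf_diagram_def by fastforce
  have nvs: "\<And>j k. (j,k) \<in> set (nullverts D) \<Longrightarrow> j \<in> set (butlast (edges D)) \<and> k = nxt D j"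
    using wf unfolding wf_diagram_def by fastforce
  have ce: "cre D (1::rat) c r q = 0" if "c \<in> set (crossings D)" "q \<le> r" for c r q
  proof -
    obtain s i j where c: "c = (s,i,j)" by (cases c)
    have ib: "i \<in> set (butlast (edges D))" "j \<in> set (butlast (edges D))" using crs[of s i j] that(1) c by simp_all
    have e1: "ix D (nxt D i) = ix D i + 1" by (rule ix_butlast(2)[OF dist ib(1)])
    have e2: "ix D (nxt D j) = ix D j + 1" by (rule ix_butlast(2)[OF dist ib(2)])
    have n1: "\<not> ((r, q) = (ix D i, ix D (nxt D i)))" unfolding e1 using that(2) by simp
    have n2: "\<not> ((r, q) = (ix D j, ix D (nxt D j)))" unfolding e2 using that(2) by simp
    have m: "(if (r, q) = (ix D i, ix D (nxt D j)) then (if s = 1 then (1::rat) * 1 - 1 else 1 - 1) else 0) = 0" by simp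
    show ?thesis unfolding c cre_def prod.case m using n1 n2 by (simp only: if_False add_0_right add_0_left)
  qed
  have ve: "nve D (1::rat) v r q = 0" if "v \<in> set (nullverts D)" "q \<le> r" for v r q
  proof -
    obtain j k where v: "v = (j,k)" by (cases v)
    have jb: "j \<in> set (butlast (edges D))" "k = nxt D j" using nvs[of j k] that(1) v by simp_all
    have e1: "ix D k = ix D j + 1" unfolding jb(2) by (rule ix_butlast(2)[OF dist jb(1)])
    have n1: "\<not> ((r, q) = (ix D j, ix D k))" unfolding e1 using that(2) by simp
    show ?thesis unfolding v nve_def prod.case using n1 by (simp only: if_False)
  qed
  have ent: "Bm D (1::rat) $$ (r,q) = (if r = q then 1 else 0)" if "r < ?n" "q < ?n" "q \<le> r" for r q
  proof -
    have "sum_list (map (\<lambda>c. cre D (1::rat) c r q) (crossings D)) = 0"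
      using ce[OF _ that(3)] by (rule sum_list_map_0)
    moreover have "sum_list (map (\<lambda>v. nve D (1::rat) v r q) (nullverts D)) = 0"
      using ve[OF _ that(3)] by (rule sum_list_map_0)
    moreover have "Bm D (1::rat) $$ (r,q) = (if r = q then 1 else 0) + sum_list (map (\<lambda>c. cre D (1::rat) c r q) (crossings D))
       + sum_list (map (\<lambda>v. nve D (1::rat) v r q) (nullverts D))"
      unfolding Bm_def using that(1,2) by simp
    ultimately show ?thesis by simp
  qed
  have dims: "dim_row (Bm D (1::rat)) = ?n" "dim_col (Bm D (1::rat)) = ?n" unfolding Bm_def by simp_all
  have ut: "upper_triangular (Bm D (1::rat))"
    unfolding upper_triangular_def dims
  proof (intro allI impI)
    fix i j assume "i < ?n" "j < i"
    then show "Bm D (1::rat) $$ (i, j) = 0" using ent[of i j] by simp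
  qed
  have cm: "Bm D (1::rat) \<in> carrier_mat ?n ?n" by (rule carrier_matI) (simp_all add: dims)
  have "det (Bm D (1::rat)) = prod_list (diag_mat (Bm D (1::rat)))"
    by (rule det_upper_triangular[OF ut cm])
  also have "diag_mat (Bm D (1::rat)) = map (\<lambda>i. 1) [0..<?n]"
    unfolding diag_mat_def dims using ent by simp
  also have "prod_list (map (\<lambda>i. 1::rat) [0..<?n]) = 1" by (rule prod_list_map_1)
  finally show ?thesis .
qed



lemma Gmat_inv:
  fixes t :: "'a::field"
  assumes d: "det (Amat D t) \<noteq> 0"
  shows "Amat D t * Gmat D t = 1\<^sub>m (length (edges D)) \<and> Gmat D t * Amat D t = 1\<^sub>m (length (edges D))
     \<and> Gmat D t \<in> carrier_mat (length (edges D)) (length (edges D))"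
proof -
  have cA: "Amat D t \<in> carrier_mat (length (edges D)) (length (edges D))" by (rule carrier_matI) (simp_all add: Amat_def)
  have "mat_inverse (Amat D t) \<noteq> None"
  proof
    assume N: "mat_inverse (Amat D t) = None"
    show False using mat_inverse(1)[OF cA N, where b="()"] det_non_zero_imp_unit[OF cA d, where b="()"] by blast
  qed
  then obtain B where B: "mat_inverse (Amat D t) = Some B" by blast
  show ?thesis using mat_inverse(2)[OF cA B] B by (simp add: Gmat_def)
qed

locale nvm =
  fixes D D' :: "'l diagram" and e a b :: 'l
  assumes wf: "wf_diagram D" and wf': "wf_diagram D'"
    and eE: "e \<in> set (edges D)" and ab: "a \<noteq> b" and aE: "a \<notin> set (edges D) - {e}" and bE: "b \<notin> set (edges D) - {e}"
    and edges': "edges D' = concat (map (\<lambda>l. if l = e then [a, b] else [l]) (edges D))"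
    and cross': "crossings D' = map (\<lambda>(s, i, j). (s, if i = e then b else i, if j = e then b else j)) (crossings D)"
    and nulls': "nullverts D' = (a, b) # map (\<lambda>(j, k). (if j = e then b else j, if k = e then a else k)) (nullverts D)"
    and rot1: "\<forall>l \<in> set (edges D). l \<noteq> e \<longrightarrow> rot D' l = rot D l"
    and rot2: "rot D' a + rot D' b = rot D e"
begin

abbreviation "E \<equiv> edges D"
abbreviation "n \<equiv> length (edges D)"
abbreviation "p \<equiv> ix D e"

lemma distE: "distinct E" using wf by (simp add: wf_diagram_def)
lemma distE': "distinct (edges D')" using wf' by (simp add: wf_diagram_def)
lemma p_lt: "p < n" and Ep: "E ! p = e" using ix_in[OF eE] by simp_all

lemma edges'_eq: "edges D' = take p E @ a # b # drop (Suc p) E"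
proof -
  have E: "E = take p E @ e # drop (Suc p) E" using id_take_nth_drop[OF p_lt] Ep by simp
  have d: "distinct (take p E @ e # drop (Suc p) E)" using distE E by simp
  have 1: "x \<noteq> e" if "x \<in> set (take p E)" for x using d that by auto
  have 2: "x \<noteq> e" if "x \<in> set (drop (Suc p) E)" for x using d that by auto
  have "edges D' = concat (map (\<lambda>l. if l = e then [a, b] else [l]) (take p E @ e # drop (Suc p) E))"
    unfolding edges' using E by simp
  also have "\<dots> = take p E @ a # b # drop (Suc p) E"
    using concat_map_id[of "take p E" e a b, OF 1] concat_map_id[of "drop (Suc p) E" e a b, OF 2] by simp
  finally show ?thesis .
qed

lemma len': "length (edges D') = Suc n"
  unfolding edges'_eq using p_lt by simp

lemma nth'_psi: "m < n \<Longrightarrow> m \<noteq> p \<Longrightarrow> edges D' ! psi p m = E ! m"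
  unfolding edges'_eq psi_def using p_lt
  by (cases "m < p") (simp_all add: nth_append min_def)

lemma nth'_a: "edges D' ! p = a" and nth'_b: "edges D' ! Suc p = b"
  unfolding edges'_eq using p_lt by (simp_all add: nth_append min_def)

lemma psi_lt: "m < n \<Longrightarrow> psi p m < Suc n" unfolding psi_def by simp

lemma ix'_a: "ix D' a = p" using ix_nth[OF distE', of p] nth'_a len' p_lt by simp
lemma ix'_b: "ix D' b = Suc p" using ix_nth[OF distE', of "Suc p"] nth'_b len' p_lt by simp

lemma ix'_other: assumes "x \<in> set E" "x \<noteq> e" shows "ix D' x = psi p (ix D x)"
proof -
  have m: "ix D x < n" "E ! ix D x = x" using ix_in[OF assms(1)] by simp_all
  have "ix D x \<noteq> p" using m Ep assms(2) by metis
  then have "edges D' ! psi p (ix D x) = x" using nth'_psi m by simp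
  then show ?thesis using ix_nth[OF distE', of "psi p (ix D x)"] psi_lt[OF m(1)] len' by simp
qed

lemma ix'_beta: "x \<in> set E \<Longrightarrow> ix D' (if x = e then b else x) = psi p (ix D x)"
  using ix'_other[of x] ix'_b by (cases "x = e") (simp_all add: psi_def)

lemma ix'_gamma: "x \<in> set E \<Longrightarrow> ix D' (if x = e then a else x) = alp p (ix D x)"
proof (cases "x = e")
  case True then show ?thesis using ix'_a by (simp add: alp_def)
next
  case False
  assume x: "x \<in> set E"
  have m: "ix D x < n" "E ! ix D x = x" using ix_in[OF x] by simp_all
  have "ix D x \<noteq> p" using m Ep False by metis
  then show ?thesis using ix'_other[OF x False] False by (simp add: alp_def psi_def)
qed

lemma ix'_nxt_beta: assumes "x \<in> set (butlast E)"
  shows "ix D' (nxt D' (if x = e then b else x)) = alp p (ix D (nxt D x))"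
proof -
  have xE: "x \<in> set E" using assms in_set_butlastD by fastforce
  obtain k where k: "k < length (butlast E)" "butlast E ! k = x" using assms by (auto simp: in_set_conv_nth)
  then have k2: "Suc k < n" "E ! k = x" by (auto simp: nth_butlast)
  then have ixk: "ix D x = k" using distE ix_nth[of D k] by simp
  have 1: "ix D (nxt D x) = Suc k" using ix_nth[OF distE k2(1)] ixk by (simp add: nxt_def)
  have 2: "psi p k + 1 < Suc n" using k2 by (simp add: psi_def)
  have "ix D' (nxt D' (if x = e then b else x)) = psi p k + 1"
    unfolding nxt_def ix'_beta[OF xE] ixk using ix_nth[OF distE' 2[folded len']] .
  then show ?thesis unfolding 1 by (simp add: psi_def alp_def)
qed


lemma cr_mem: "(s,i,j) \<in> set (crossings D) \<Longrightarrow> i \<in> set (butlast E) \<and> j \<in> set (butlast E)"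
  using wf unfolding wf_diagram_def by fastforce
lemma nv_mem: "(j,k) \<in> set (nullverts D) \<Longrightarrow> j \<in> set (butlast E) \<and> k = nxt D j"
  using wf unfolding wf_diagram_def by fastforce
lemma butlast_E: "x \<in> set (butlast E) \<Longrightarrow> x \<in> set E" using in_set_butlastD by fastforce

lemma nxt_in: assumes "x \<in> set (butlast E)" shows "nxt D x \<in> set E"
proof -
  obtain k where k: "k < length (butlast E)" "butlast E ! k = x" using assms by (auto simp: in_set_conv_nth)
  then have k2: "Suc k < n" "E ! k = x" by (auto simp: nth_butlast)
  then have ixk: "ix D x = k" using distE ix_nth[of D k] by simp
  show ?thesis unfolding nxt_def ixk using k2 by simp
qed

lemma cr'_entry:
  assumes c: "c \<in> set (crossings D)"
  shows "cr_entry D' t ((\<lambda>(s, i, j). (s, if i = e then b else i, if j = e then b else j)) c) r q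
    = (if r = p \<or> q = Suc p then 0 else cr_entry D t c (phi p r) (phi p q))"
proof -
  obtain s i j where cc: "c = (s,i,j)" by (cases c)
  have ij: "i \<in> set (butlast E)" "j \<in> set (butlast E)" using cr_mem c cc by simp_all
  note ixs = ix'_beta[OF butlast_E[OF ij(1)]] ix'_beta[OF butlast_E[OF ij(2)]]
     ix'_nxt_beta[OF ij(1)] ix'_nxt_beta[OF ij(2)]
  show ?thesis
  proof (cases "r = p \<or> q = Suc p")
    case True
    then show ?thesis unfolding cc cr_entry_def prod.case ixs by (elim disjE) (simp_all add: psi_ne' alp_ne')
  next
    case False
    then have "r \<noteq> p" "q \<noteq> Suc p" by simp_all
    then show ?thesis unfolding cc cr_entry_def prod.case ixs using False by (simp add: posn1 posn2)
  qed
qed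

lemma nv'_entry:
  assumes v: "v \<in> set (nullverts D)"
  shows "nv_entry D' ((\<lambda>(j, k). (if j = e then b else j, if k = e then a else k)) v) r q
    = (if r = p \<or> q = Suc p then 0 else (nv_entry D v (phi p r) (phi p q) :: 'a::field))"
proof -
  obtain j k where vv: "v = (j,k)" by (cases v)
  have jk: "j \<in> set (butlast E)" "k = nxt D j" using nv_mem v vv by simp_all
  have kE: "k \<in> set E" using nxt_in[OF jk(1)] jk(2) by simp
  note ixs = ix'_beta[OF butlast_E[OF jk(1)]] ix'_gamma[OF kE]
  show ?thesis
  proof (cases "r = p \<or> q = Suc p")
    case True
    then show ?thesis unfolding vv nv_entry_def prod.case ixs by (elim disjE) (simp_all add: psi_ne' alp_ne')
  next
    case False
    then have "r \<noteq> p" "q \<noteq> Suc p" by simp_all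
    then show ?thesis unfolding vv nv_entry_def prod.case ixs using False by (simp add: posn1 posn2)
  qed
qed



lemma Amat'_eq: "Amat D' (t::'a::field) = extA n p (Amat D t)"
proof (rule eq_matI)
  show "dim_row (Amat D' t) = dim_row (extA n p (Amat D t))" by (simp add: Amat_def len')
  show "dim_col (Amat D' t) = dim_col (extA n p (Amat D t))" by (simp add: Amat_def len')
  fix r q assume "r < dim_row (extA n p (Amat D t))" "q < dim_col (extA n p (Amat D t))"
  then have r: "r < Suc n" and q: "q < Suc n" by simp_all
  let ?fc = "\<lambda>(s, i, j). (s, if i = e then b else i, if j = e then b else j)"
  let ?fv = "\<lambda>(j, k). (if j = e then b else j, if k = e then a else k)"
  have "Amat D' t $$ (r,q) = (if r = q then 1 else 0)
    + sum_list (map (\<lambda>c. cr_entry D' t c r q) (crossings D'))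
    + sum_list (map (\<lambda>v. nv_entry D' v r q) (nullverts D'))"
    unfolding Amat_def using r q len' by simp
  also have "sum_list (map (\<lambda>c. cr_entry D' t c r q) (crossings D'))
     = sum_list (map (\<lambda>c. if r = p \<or> q = Suc p then 0 else cr_entry D t c (phi p r) (phi p q)) (crossings D))"
    unfolding cross' map_map o_def by (intro arg_cong[where f=sum_list] map_cong refl cr'_entry)
  also have "sum_list (map (\<lambda>v. nv_entry D' v r q) (nullverts D'))
     = nv_entry D' (a,b) r q + sum_list (map (\<lambda>v. if r = p \<or> q = Suc p then 0 else nv_entry D v (phi p r) (phi p q)) (nullverts D))"
    unfolding nulls' list.map sum_list.Cons map_map o_def
    by (intro arg_cong[where f="\<lambda>x. _ + x"] arg_cong[where f=sum_list] map_cong refl nv'_entry)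
  finally have A1: "Amat D' t $$ (r,q) = (if r = q then 1 else 0)
    + sum_list (map (\<lambda>c. if r = p \<or> q = Suc p then 0 else cr_entry D t c (phi p r) (phi p q)) (crossings D))
    + (nv_entry D' (a,b) r q + sum_list (map (\<lambda>v. if r = p \<or> q = Suc p then 0 else nv_entry D v (phi p r) (phi p q)) (nullverts D)))" .
  show "Amat D' t $$ (r,q) = extA n p (Amat D t) $$ (r,q)"
  proof (cases "r = p \<or> q = Suc p")
    case True
    have z1: "sum_list (map (\<lambda>c. if r = p \<or> q = Suc p then 0 else cr_entry D t c (phi p r) (phi p q)) (crossings D)) = (0::'a)"
      using True by (intro sum_list_map_0) simp
    have z2: "sum_list (map (\<lambda>v. if r = p \<or> q = Suc p then 0 else nv_entry D v (phi p r) (phi p q)) (nullverts D)) = (0::'a)"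
      using True by (intro sum_list_map_0) simp
    show ?thesis unfolding A1 z1 z2 extA_idx[OF r q] using True
      by (elim disjE) (simp_all add: nv_entry_def ix'_a ix'_b)
  next
    case False
    have pr: "phi p r < n" "phi p q < n" using phi_lt[OF r p_lt] phi_lt[OF q p_lt] by simp_all
    have "Amat D t $$ (phi p r, phi p q) = (if phi p r = phi p q then 1 else 0)
      + sum_list (map (\<lambda>c. cr_entry D t c (phi p r) (phi p q)) (crossings D))
      + sum_list (map (\<lambda>v. nv_entry D v (phi p r) (phi p q)) (nullverts D))"
      unfolding Amat_def using pr by simp
    moreover have "nv_entry D' (a,b) r q = (0::'a)" using False by (simp add: nv_entry_def ix'_a ix'_b)
    moreover have "phi p r = phi p q \<longleftrightarrow> (r = q \<or> (r = Suc p \<and> q = p))" using False by (intro phi_eq) simp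
    ultimately show ?thesis unfolding A1 extA_idx[OF r q] using False by simp
  qed
qed


definition bet where "bet x = (if x = e then b else x)"

lemma phi_psi: "phi p (psi p m) = m" unfolding phi_def psi_def by simp

lemma Gmat'_eq:
  fixes t :: "'a::field"
  assumes d: "det (Amat D t) \<noteq> 0"
  shows "Gmat D' t = extG n p (Gmat D t)"
proof -
  let ?A = "Amat D t" and ?G = "Gmat D t" and ?A' = "Amat D' t" and ?G' = "Gmat D' t"
  have G: "?A * ?G = 1\<^sub>m n" "?G \<in> carrier_mat n n" using Gmat_inv[OF d] by simp_all
  have cA: "?A \<in> carrier_mat n n" by (rule carrier_matI) (simp_all add: Amat_def)
  have AC: "?A' * extG n p ?G = 1\<^sub>m (Suc n)" unfolding Amat'_eq by (rule ext_inverse[OF cA G(2) G(1) p_lt])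
  have cA': "?A' \<in> carrier_mat (Suc n) (Suc n)" by (rule carrier_matI) (simp_all add: Amat_def len')
  have cC: "extG n p ?G \<in> carrier_mat (Suc n) (Suc n)" by (rule carrier_matI) simp_all
  have "det ?A' * det (extG n p ?G) = 1" using det_mult[OF cA' cC] AC det_one by simp
  then have d': "det ?A' \<noteq> 0" by auto
  have G': "?G' * ?A' = 1\<^sub>m (Suc n)" "?G' \<in> carrier_mat (Suc n) (Suc n)" using Gmat_inv[OF d'] len' by simp_all
  have "?G' = ?G' * (?A' * extG n p ?G)" unfolding AC using G'(2) by simp
  also have "\<dots> = (?G' * ?A') * extG n p ?G" using assoc_mult_mat[OF G'(2) cA' cC] by simp
  also have "\<dots> = extG n p ?G" unfolding G'(1) using cC by simp
  finally show ?thesis .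
qed

lemma gg_bet:
  fixes t :: "'a::field"
  assumes d: "det (Amat D t) \<noteq> 0" and x: "x \<in> set E" and y: "y \<in> set E"
  shows "gg D' t (bet x) (bet y) = gg D t x y"
proof -
  have "psi p (ix D x) < Suc n" using psi_lt ix_in[OF x] by blast
  moreover have "psi p (ix D y) < Suc n" using psi_lt ix_in[OF y] by blast
  ultimately show ?thesis unfolding gg_def bet_def ix'_beta[OF x] ix'_beta[OF y] Gmat'_eq[OF d]
    by (simp add: extG_idx phi_psi psi_ne)
qed

lemma gg_a:
  fixes t :: "'a::field"
  assumes d: "det (Amat D t) \<noteq> 0"
  shows "gg D' t a a = gg D t e e"
  unfolding gg_def ix'_a Gmat'_eq[OF d] using p_lt by (simp add: extG_idx)

lemma gg_b:
  fixes t :: "'a::field"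
  assumes d: "det (Amat D t) \<noteq> 0"
  shows "gg D' t b b = gg D t e e"
  unfolding gg_def ix'_b Gmat'_eq[OF d] using p_lt by (simp add: extG_idx)

lemma cross'_bet: "crossings D' = map (\<lambda>(s, i, j). (s, bet i, bet j)) (crossings D)"
  unfolding cross' bet_def ..

lemma F1_eq:
  fixes T1 T2 :: "'a::field"
  assumes d1: "det (Amat D T1) \<noteq> 0" and d2: "det (Amat D T2) \<noteq> 0" and d3: "det (Amat D (T1 * T2)) \<noteq> 0"
    and c: "c \<in> set (crossings D)"
  shows "F1 D' T1 T2 ((\<lambda>(s, i, j). (s, bet i, bet j)) c) = F1 D T1 T2 c"
proof -
  obtain s i j where cc: "c = (s,i,j)" by (cases c)
  have ij: "i \<in> set E" "j \<in> set E" using cr_mem c cc butlast_E by simp_all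
  show ?thesis unfolding cc F1_def prod.case Let_def
    by (simp only: gg_bet[OF d1] gg_bet[OF d2] gg_bet[OF d3] ij)
qed

lemma F2_eq:
  fixes T1 T2 :: "'a::field"
  assumes d1: "det (Amat D T1) \<noteq> 0" and d2: "det (Amat D T2) \<noteq> 0" and d3: "det (Amat D (T1 * T2)) \<noteq> 0"
    and c0: "c0 \<in> set (crossings D)" and c1: "c1 \<in> set (crossings D)"
  shows "F2 D' T1 T2 ((\<lambda>(s, i, j). (s, bet i, bet j)) c0) ((\<lambda>(s, i, j). (s, bet i, bet j)) c1) = F2 D T1 T2 c0 c1"
proof -
  obtain s0 i0 j0 where cc0: "c0 = (s0,i0,j0)" by (cases c0)
  obtain s1 i1 j1 where cc1: "c1 = (s1,i1,j1)" by (cases c1)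
  have ij: "i0 \<in> set E" "j0 \<in> set E" "i1 \<in> set E" "j1 \<in> set E"
    using cr_mem c0 cc0 c1 cc1 butlast_E by simp_all
  show ?thesis unfolding cc0 cc1 F2_def prod.case Let_def
    by (simp only: gg_bet[OF d1] gg_bet[OF d2] gg_bet[OF d3] ij)
qed

lemma F3_sum:
  fixes T1 T2 :: "'a::field"
  assumes d3: "det (Amat D (T1 * T2)) \<noteq> 0"
  shows "sum_list (map (F3 D' T1 T2) (edges D')) = sum_list (map (F3 D T1 T2) (edges D))"
proof -
  have "sum_list (map (F3 D' T1 T2) (edges D'))
      = sum_list (map (\<lambda>l. sum_list (map (F3 D' T1 T2) (if l = e then [a, b] else [l]))) E)"
    unfolding edges' sum_list_map_concat map_map o_def ..
  also have "\<dots> = sum_list (map (F3 D T1 T2) E)"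
  proof (intro arg_cong[where f=sum_list] map_cong refl)
    fix l assume l: "l \<in> set E"
    show "sum_list (map (F3 D' T1 T2) (if l = e then [a, b] else [l])) = F3 D T1 T2 l"
    proof (cases "l = e")
      case True
      have r: "(of_int (rot D' a) :: 'a) + of_int (rot D' b) = of_int (rot D e)"
        using rot2 by (metis of_int_add)
      have "F3 D' T1 T2 a + F3 D' T1 T2 b = (gg D (T1 * T2) e e - 1/2) * (of_int (rot D' a) + of_int (rot D' b))"
        unfolding F3_def gg_a[OF d3] gg_b[OF d3] by (simp add: algebra_simps)
      then show ?thesis using True r by (simp add: F3_def)
    next
      case False
      have "gg D' (T1 * T2) l l = gg D (T1 * T2) l l"
        using gg_bet[OF d3 l l] False by (simp add: bet_def)
      moreover have "rot D' l = rot D l" using rot1 l False by simp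
      ultimately show ?thesis using False by (simp add: F3_def)
    qed
  qed
  finally show ?thesis .
qed

lemma product_map_both: "List.product (map f xs) (map f ys) = map (\<lambda>(x,y). (f x, f y)) (List.product xs ys)"
  by (induct xs) simp_all

lemma theta_eq:
  fixes T1 T2 :: "'a::field"
  assumes d1: "det (Amat D T1) \<noteq> 0" and d2: "det (Amat D T2) \<noteq> 0" and d3: "det (Amat D (T1 * T2)) \<noteq> 0"
  shows "theta0_at D' T1 T2 = theta0_at D T1 T2"
proof -
  let ?f = "\<lambda>(s::int, i, j). (s, bet i, bet j)"
  have s1: "sum_list (map (F1 D' T1 T2) (crossings D')) = sum_list (map (F1 D T1 T2) (crossings D))"
    unfolding cross'_bet map_map o_def
    by (intro arg_cong[where f=sum_list] map_cong refl F1_eq[OF d1 d2 d3])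
  have s2: "sum_list (map (\<lambda>(c0, c1). F2 D' T1 T2 c0 c1) (List.product (crossings D') (crossings D')))
     = sum_list (map (\<lambda>(c0, c1). F2 D T1 T2 c0 c1) (List.product (crossings D) (crossings D)))"
    unfolding cross'_bet product_map_both map_map o_def
  proof (intro arg_cong[where f=sum_list] map_cong refl)
    fix x assume "x \<in> set (List.product (crossings D) (crossings D))"
    then obtain c0 c1 where x: "x = (c0, c1)" "c0 \<in> set (crossings D)" "c1 \<in> set (crossings D)" by auto
    show "(case (case x of (x, y) \<Rightarrow> (?f x, ?f y)) of (c0, c1) \<Rightarrow> F2 D' T1 T2 c0 c1) = (case x of (c0, c1) \<Rightarrow> F2 D T1 T2 c0 c1)"
      unfolding x(1) prod.case by (rule F2_eq[OF d1 d2 d3 x(2,3)])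
  qed
  show ?thesis unfolding theta0_at_def s1 s2 F3_sum[OF d3] ..
qed

end

definition hv :: "rat poly poly \<Rightarrow> rat" where "hv P = poly (poly P 1) 1"
definition emb :: "rat poly poly \<Rightarrow> QT" where "emb x = Fract x 1"

lemma hv_hom: "comm_ring_hom hv"
  by unfold_locales (simp_all add: hv_def)

lemma emb_hom: "comm_ring_hom emb"
  by unfold_locales (simp_all add: emb_def One_fract_def Zero_fract_def[symmetric])

lemma emb_nz: assumes "x \<noteq> 0" shows "emb x \<noteq> 0"
proof
  assume "emb x = 0"
  then have "Fract x 1 = Fract 0 (1::rat poly poly)" unfolding emb_def by (simp only: Zero_fract_def[symmetric])
  then have "x * 1 = 0 * 1" using eq_fract(1)[of 1 1 x 0] by simp
  then show False using assms by simp
qed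

lemma det_nonzero:
  assumes wf: "wf_diagram D" and hP: "hv P = 1"
  shows "det (Amat D (emb P)) \<noteq> 0"
proof -
  have "hv (det (Bm D P)) = det (map_mat hv (Bm D P))" using comm_ring_hom.hom_det[OF hv_hom] by simp
  also have "\<dots> = det (Bm D (hv P))" by (rule arg_cong[where f=det], rule comm_ring_hom.Bm_hom[OF hv_hom])
  also have "\<dots> = 1" unfolding hP by (rule det_Bm1[OF wf])
  finally have "det (Bm D P) \<noteq> 0" using hP by (metis hv_def poly_0 zero_neq_one)
  then have "emb (det (Bm D P)) \<noteq> 0" by (rule emb_nz)
  moreover have "emb (det (Bm D P)) = det (Bm D (emb P))"
    using comm_ring_hom.hom_det[OF emb_hom] comm_ring_hom.Bm_hom[OF emb_hom] by metis
  moreover have "P \<noteq> 0" using hP by (auto simp: hv_def)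
  then have "emb P \<noteq> 0" by (rule emb_nz)
  ultimately have "det (emb P \<cdot>\<^sub>m Amat D (emb P)) \<noteq> 0" using Bm_Amat[OF wf] by metis
  then show ?thesis by simp
qed

lemma dets:
  assumes wf: "wf_diagram D"
  shows "det (Amat D varT1) \<noteq> 0" "det (Amat D varT2) \<noteq> 0" "det (Amat D (varT1 * varT2)) \<noteq> 0"
proof -
  have v1: "varT1 = emb [:[:0, 1:]:]" by (simp add: varT1_def emb_def)
  have v2: "varT2 = emb [:0, 1:]" by (simp add: varT2_def emb_def)
  have v3: "varT1 * varT2 = emb ([:[:0, 1:]:] * [:0, 1:])" by (simp add: varT1_def varT2_def emb_def)
  show "det (Amat D varT1) \<noteq> 0" unfolding v1 by (rule det_nonzero[OF wf]) (simp add: hv_def)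
  show "det (Amat D varT2) \<noteq> 0" unfolding v2 by (rule det_nonzero[OF wf]) (simp add: hv_def)
  show "det (Amat D (varT1 * varT2)) \<noteq> 0" unfolding v3 by (rule det_nonzero[OF wf]) (simp add: hv_def)
qed

lemma move_eq:
  assumes "wf_diagram D" "wf_diagram D'" "null_vertex_move D D'"
  shows "theta0 D' = theta0 D"
proof -
  obtain e a b where m: "e \<in> set (edges D) \<and> a \<noteq> b \<and> a \<notin> set (edges D) - {e} \<and> b \<notin> set (edges D) - {e} \<and>
     edges D' = concat (map (\<lambda>l. if l = e then [a, b] else [l]) (edges D)) \<and>
     crossings D' = map (\<lambda>(s, i, j). (s, if i = e then b else i, if j = e then b else j)) (crossings D) \<and>
     nullverts D' = (a, b) # map (\<lambda>(j, k). (if j = e then b else j, if k = e then a else k)) (nullverts D) \<and>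
     (\<forall>l \<in> set (edges D). l \<noteq> e \<longrightarrow> rot D' l = rot D l) \<and>
     rot D' a + rot D' b = rot D e"
    using assms(3) unfolding null_vertex_move_def by blast
  interpret nvm D D' e a b using assms(1,2) m by unfold_locales simp_all
  show ?thesis unfolding theta0_def using theta_eq dets[OF assms(1)] by blast
qed

theorem mainTheorem5:
  fixes D D' :: "'l diagram"
  assumes "wf_diagram D" and "wf_diagram D'"
    and "null_vertex_move D D' \<or> null_vertex_move D' D"
  shows "theta0 D' = theta0 D"
  using assms move_eq[of D D'] move_eq[of D' D] by metis

end
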